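(* Let $G=(V,E)$ be an unweighted graph with $n$ vertices and let $k\geq 2$ be an integer. Run the clustering defined in the context with $r=k-1$ and $p=1-n^{-1/k}$. Then there exists a set of edges $F\subseteq E$, determined by the sampled values, such that for every outcome and every edge $(x,y)\in E$, one of its endpoints has an edge from $F$ into the cluster of the other endpoint (i.e., either $(x,y')\in F$ for some $y'$ with $c_{y'}=c_y$, or $(x',y)\in F$ for some $x'$ with $c_{x'}=c_x$), and $\mathbb{E}[|F|]=O(n^{1+1/k})$.
   Context: Setting (the clustering): $G=(V,E)$ is a graph (here unweighted, i.e., all edge weights $1$) with shortest-path distance $d_G$, and each vertex has a distinct identifier $\mathrm{ID}(v)$. Let $p\in(0,1)$ and $r\in\mathbb{N}$. Let $\mathrm{GeomCap}(p,r)$ be the distribution on $\{0,\dots,r\}$ with $\Pr[=i]=p(1-p)^i$ for $0\leq i\leq r-1$ and $\Pr[=r]=(1-p)^r$. Each vertex $v$ independently samples $\delta_v\sim\mathrm{GeomCap}(p,r)$. For $u,x\in V$ define $d^{(u)}(s,x):=r-\delta_u+d_G(u,x)$ and the level $d_{G'}(s,x):=\min_{u\in V} d^{(u)}(s,x)$. The cluster center $c_x$ of $x$ is the vertex $u$ with smallest $\mathrm{ID}$ among those with $d^{(u)}(s,x)=d_{G'}(s,x)$; the cluster of a center $c$ is $\{x\in V: c_x=c\}$. *)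

theory Defs
  imports "HOL-Probability.Probability"
begin

definition geomcap :: "real \<Rightarrow> nat \<Rightarrow> nat pmf" where
  "geomcap p r = embed_pmf (\<lambda>i. if i < r then p * (1 - p) ^ i
                                 else if i = r then (1 - p) ^ r else 0)"

definition dG :: "(nat \<times> nat) set \<Rightarrow> nat \<Rightarrow> nat \<Rightarrow> enat" where
  "dG E u x = (if \<exists>m. (u, x) \<in> E ^^ m then enat (LEAST m. (u, x) \<in> E ^^ m) else \<infinity>)"

definition dshift :: "(nat \<times> nat) set \<Rightarrow> nat \<Rightarrow> (nat \<Rightarrow> nat) \<Rightarrow> nat \<Rightarrow> nat \<Rightarrow> enat" where
  "dshift E r \<delta> u x = enat (r - \<delta> u) + dG E u x"

definition level :: "nat set \<Rightarrow> (nat \<times> nat) set \<Rightarrow> nat \<Rightarrow> (nat \<Rightarrow> nat) \<Rightarrow> nat \<Rightarrow> enat" where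
  "level V E r \<delta> x = Min ((\<lambda>u. dshift E r \<delta> u x) ` V)"

definition center :: "nat set \<Rightarrow> (nat \<times> nat) set \<Rightarrow> (nat \<Rightarrow> nat) \<Rightarrow> nat \<Rightarrow> (nat \<Rightarrow> nat) \<Rightarrow> nat \<Rightarrow> nat" where
  "center V E ID r \<delta> x =
     (THE c. c \<in> V \<and> dshift E r \<delta> c x = level V E r \<delta> x \<and>
        (\<forall>u \<in> V. dshift E r \<delta> u x = level V E r \<delta> x \<longrightarrow> ID c \<le> ID u))"

end

theory Submission
  imports Defs
begin


lemma dG_self: "dG E x x = 0"
proof -
  have "(x,x) \<in> E ^^ 0" by simp
  then have "(LEAST m. (x, x) \<in> E ^^ m) = 0" by (metis (mono_tags) Least_eq_0)
  moreover have "\<exists>m. (x,x) \<in> E ^^ m" using \<open>(x,x) \<in> E ^^ 0\<close> by blast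
  ultimately show ?thesis unfolding dG_def by (simp add: zero_enat_def)
qed

lemma dG_step: assumes "(y,x) \<in> E" shows "dG E u x \<le> dG E u y + 1"
proof (cases "\<exists>m. (u, y) \<in> E ^^ m")
  case False then show ?thesis by (simp add: dG_def)
next
  case True
  define m where "m = (LEAST m. (u, y) \<in> E ^^ m)"
  have m: "(u,y) \<in> E ^^ m" unfolding m_def using True by (metis LeastI_ex)
  have "(u,x) \<in> E ^^ Suc m" using m assms by auto
  then have "(LEAST m. (u, x) \<in> E ^^ m) \<le> Suc m" by (rule Least_le)
  moreover have "dG E u y = enat m" using True by (simp add: dG_def m_def)
  moreover have "dG E u x = enat (LEAST m. (u, x) \<in> E ^^ m)"
  proof -
    have "\<exists>m. (u,x) \<in> E ^^ m" using \<open>(u,x) \<in> E ^^ Suc m\<close> by blast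
    then show ?thesis unfolding dG_def by simp
  qed
  ultimately show ?thesis by (simp add: one_enat_def)
qed

lemma dshift_step: assumes "(y,x) \<in> E" shows "dshift E r \<delta> u x \<le> dshift E r \<delta> u y + 1"
  using dG_step[OF assms, of u] unfolding dshift_def
  by (metis add.assoc add_left_mono)

lemma dshift_self: "dshift E r \<delta> x x = enat (r - \<delta> x)"
  by (simp add: dshift_def dG_self)



lemma level_le: "finite V \<Longrightarrow> w \<in> V \<Longrightarrow> level V E r \<delta> x \<le> dshift E r \<delta> w x"
  unfolding level_def by (rule Min_le) auto

lemma level_in: "finite V \<Longrightarrow> V \<noteq> {} \<Longrightarrow> \<exists>w\<in>V. level V E r \<delta> x = dshift E r \<delta> w x"
proof -
  assume "finite V" "V \<noteq> {}"
  then have "Min ((\<lambda>u. dshift E r \<delta> u x) ` V) \<in> (\<lambda>u. dshift E r \<delta> u x) ` V"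
    by (intro Min_in) auto
  then show ?thesis unfolding level_def by auto
qed

lemma level_finite: "finite V \<Longrightarrow> x \<in> V \<Longrightarrow> level V E r \<delta> x \<noteq> \<infinity>"
  using level_le[of V x E r \<delta> x] dshift_self[of E r \<delta> x] by (metis enat_ord_simps(5) infinity_ileE)

lemma center_unique:
  assumes "inj_on ID V"
    and "c \<in> V \<and> dshift E r \<delta> c x = level V E r \<delta> x \<and>
        (\<forall>u \<in> V. dshift E r \<delta> u x = level V E r \<delta> x \<longrightarrow> ID c \<le> ID u)"
  shows "center V E ID r \<delta> x = c"
  unfolding center_def
proof (rule the1_equality)
  show "\<exists>!c. c \<in> V \<and> dshift E r \<delta> c x = level V E r \<delta> x \<and>
        (\<forall>u \<in> V. dshift E r \<delta> u x = level V E r \<delta> x \<longrightarrow> ID c \<le> ID u)"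
  proof (rule ex1I[of _ c])
    show "c \<in> V \<and> dshift E r \<delta> c x = level V E r \<delta> x \<and>
        (\<forall>u \<in> V. dshift E r \<delta> u x = level V E r \<delta> x \<longrightarrow> ID c \<le> ID u)" by fact
    fix c' assume c': "c' \<in> V \<and> dshift E r \<delta> c' x = level V E r \<delta> x \<and>
        (\<forall>u \<in> V. dshift E r \<delta> u x = level V E r \<delta> x \<longrightarrow> ID c' \<le> ID u)"
    then have "ID c' = ID c" using assms(2) by (meson order_antisym)
    then show "c' = c" using assms c' by (meson inj_onD)
  qed
qed fact

lemma center_spec:
  assumes "finite V" "V \<noteq> {}" "inj_on ID V"
  shows "center V E ID r \<delta> x \<in> V \<and> dshift E r \<delta> (center V E ID r \<delta> x) x = level V E r \<delta> x \<and>
        (\<forall>u \<in> V. dshift E r \<delta> u x = level V E r \<delta> x \<longrightarrow> ID (center V E ID r \<delta> x) \<le> ID u)"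
proof -
  define M where "M = {w\<in>V. dshift E r \<delta> w x = level V E r \<delta> x}"
  obtain w where "w \<in> V" "level V E r \<delta> x = dshift E r \<delta> w x" using level_in[OF assms(1,2)] by blast
  then have "M \<noteq> {}" unfolding M_def by auto
  have "finite M" using assms(1) unfolding M_def by auto
  then have "Min (ID ` M) \<in> ID ` M" using \<open>M \<noteq> {}\<close> by (intro Min_in) auto
  then obtain c where c: "c \<in> M" "ID c = Min (ID ` M)" by auto
  have "c \<in> V \<and> dshift E r \<delta> c x = level V E r \<delta> x \<and>
        (\<forall>u \<in> V. dshift E r \<delta> u x = level V E r \<delta> x \<longrightarrow> ID c \<le> ID u)"
    using c \<open>finite M\<close> unfolding M_def by auto
  moreover then have "center V E ID r \<delta> x = c" using center_unique[OF assms(3)] by blast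
  ultimately show ?thesis by simp
qed

lemma center_eqI:
  assumes "finite V" "inj_on ID V" "c \<in> V"
    and "\<And>w. w \<in> V \<Longrightarrow> dshift E r \<delta> c x \<le> dshift E r \<delta> w x"
    and "\<And>w. w \<in> V \<Longrightarrow> dshift E r \<delta> w x = dshift E r \<delta> c x \<Longrightarrow> ID c \<le> ID w"
  shows "center V E ID r \<delta> x = c"
proof -
  have "level V E r \<delta> x = dshift E r \<delta> c x"
    unfolding level_def using assms by (intro Min_eqI) auto
  then show ?thesis using assms by (intro center_unique) auto
qed



definition Pay :: "nat set \<Rightarrow> (nat \<times> nat) set \<Rightarrow> (nat \<Rightarrow> nat) \<Rightarrow> nat \<Rightarrow> (nat \<Rightarrow> nat) \<Rightarrow> nat \<Rightarrow> nat set" where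
  "Pay V E ID r \<delta> x = {u \<in> V. dshift E r \<delta> u x = level V E r \<delta> x \<or>
      (dshift E r \<delta> u x = level V E r \<delta> x + 1 \<and> ID u < ID (center V E ID r \<delta> x))}"

lemma dshift_upd_other: "w \<noteq> u \<Longrightarrow> dshift E r (\<delta>(u := j)) w x = dshift E r \<delta> w x"
  by (simp add: dshift_def)

lemma dshift_upd_Suc: "\<delta> u < r \<Longrightarrow> dshift E r \<delta> u x = dshift E r (\<delta>(u := Suc (\<delta> u))) u x + 1"
proof -
  assume "\<delta> u < r"
  then have "enat (r - \<delta> u) = enat (r - Suc (\<delta> u)) + 1" by (simp add: one_enat_def)
  then show ?thesis by (simp add: dshift_def ac_simps)
qed

lemma enat_plus1_cancel: "(a::enat) + 1 = b + 1 \<Longrightarrow> a = b"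
  by (metis eSuc_inject plus_1_eSuc(2))

lemma enat_lt_plus1: "(a::enat) \<noteq> \<infinity> \<Longrightarrow> a < a + 1"
  by (cases a) (auto simp: one_enat_def)


lemma shift_center:
  assumes fin: "finite V" and inj: "inj_on ID V" and x: "x \<in> V"
    and u: "u \<in> Pay V E ID r \<delta> x" and lt: "\<delta> u < r"
  shows "center V E ID r (\<delta>(u := Suc (\<delta> u))) x = u"
proof -
  let ?d' = "\<delta>(u := Suc (\<delta> u))"
  let ?D = "\<lambda>w. dshift E r \<delta> w x" and ?D' = "\<lambda>w. dshift E r ?d' w x"
  let ?L = "level V E r \<delta> x"
  have uV: "u \<in> V" using u by (simp add: Pay_def)
  have Vne: "V \<noteq> {}" using x by auto
  have Lfin: "?L \<noteq> \<infinity>" using level_finite[OF fin x] .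
  have Lle: "\<And>w. w \<in> V \<Longrightarrow> ?L \<le> ?D w" using level_le[OF fin] by blast
  have Du: "?D u = ?D' u + 1" using dshift_upd_Suc[of \<delta> u r E x, OF lt] .
  have Dw: "\<And>w. w \<noteq> u \<Longrightarrow> ?D' w = ?D w" by (rule dshift_upd_other)
  have cs: "\<And>w. w \<in> V \<Longrightarrow> ?D w = ?L \<Longrightarrow> ID (center V E ID r \<delta> x) \<le> ID w"
    using center_spec[OF fin Vne inj] by blast
  from u consider (tie) "?D u = ?L" | (one) "?D u = ?L + 1" "ID u < ID (center V E ID r \<delta> x)"
    by (auto simp: Pay_def)
  then show ?thesis
  proof cases
    case tie
    have D'u: "?D' u + 1 = ?L" using Du tie by simp
    have fin': "?D' u \<noteq> \<infinity>" using D'u Lfin by (metis plus_eq_infty_iff_enat)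
    have less: "\<And>w. w \<in> V \<Longrightarrow> w \<noteq> u \<Longrightarrow> ?D' u < ?D' w"
    proof -
      fix w assume "w \<in> V" "w \<noteq> u"
      have "?D' u < ?D' u + 1" using enat_lt_plus1[OF fin'] .
      also have "\<dots> \<le> ?D w" using D'u Lle[OF \<open>w \<in> V\<close>] by simp
      finally show "?D' u < ?D' w" using Dw[OF \<open>w \<noteq> u\<close>] by simp
    qed
    show ?thesis
    proof (rule center_eqI[OF fin inj uV])
      fix w assume "w \<in> V"
      then show "?D' u \<le> ?D' w" using less by (cases "w = u") (auto intro: less_imp_le)
    next
      fix w assume "w \<in> V" "?D' w = ?D' u"
      then have "w = u" using less by (metis less_irrefl)
      then show "ID u \<le> ID w" by simp
    qed
  next
    case one
    have D'u: "?D' u = ?L" using Du one(1) by (metis enat_plus1_cancel)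
    show ?thesis
    proof (rule center_eqI[OF fin inj uV])
      fix w assume "w \<in> V"
      then show "?D' u \<le> ?D' w" using D'u Lle Dw by (cases "w = u") auto
    next
      fix w assume w: "w \<in> V" "?D' w = ?D' u"
      show "ID u \<le> ID w"
      proof (cases "w = u")
        case False
        then have "?D w = ?L" using w D'u Dw by simp
        then have "ID (center V E ID r \<delta> x) \<le> ID w" using cs w(1) by blast
        then show ?thesis using one(2) by simp
      qed simp
    qed
  qed
qed



definition rep :: "nat set \<Rightarrow> (nat \<times> nat) set \<Rightarrow> (nat \<Rightarrow> nat) \<Rightarrow> nat \<Rightarrow> (nat \<Rightarrow> nat) \<Rightarrow> nat \<Rightarrow> nat \<Rightarrow> nat" where
  "rep V E ID r \<delta> x c = (SOME y. (x,y) \<in> E \<and> center V E ID r \<delta> y = c)"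

definition Sig :: "nat set \<Rightarrow> (nat \<times> nat) set \<Rightarrow> (nat \<Rightarrow> nat) \<Rightarrow> nat \<Rightarrow> (nat \<Rightarrow> nat) \<Rightarrow> (nat \<times> nat) set" where
  "Sig V E ID r \<delta> = {(x,c). x \<in> V \<and> c \<in> Pay V E ID r \<delta> x \<and> (\<exists>y. (x,y) \<in> E \<and> center V E ID r \<delta> y = c)}"

definition Fs :: "nat set \<Rightarrow> (nat \<times> nat) set \<Rightarrow> (nat \<Rightarrow> nat) \<Rightarrow> nat \<Rightarrow> (nat \<Rightarrow> nat) \<Rightarrow> (nat \<times> nat) set" where
  "Fs V E ID r \<delta> = (\<lambda>(x,c). (x, rep V E ID r \<delta> x c)) ` Sig V E ID r \<delta> \<union>
                    (\<lambda>(x,c). (rep V E ID r \<delta> x c, x)) ` Sig V E ID r \<delta>"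

lemma rep_spec: "(x,y) \<in> E \<Longrightarrow> center V E ID r \<delta> y = c \<Longrightarrow>
   (x, rep V E ID r \<delta> x c) \<in> E \<and> center V E ID r \<delta> (rep V E ID r \<delta> x c) = c"
  unfolding rep_def by (rule someI) blast

lemma Fs_sub: assumes "sym E" shows "Fs V E ID r \<delta> \<subseteq> E"
proof -
  have "(x, rep V E ID r \<delta> x c) \<in> E" if "(x,c) \<in> Sig V E ID r \<delta>" for x c
    using that rep_spec unfolding Sig_def by blast
  then show ?thesis unfolding Fs_def using assms by (auto dest: symD)
qed

lemma pay_gives:
  assumes "x \<in> V" "c \<in> Pay V E ID r \<delta> x" "(x,y) \<in> E" "center V E ID r \<delta> y = c"
  shows "(x, rep V E ID r \<delta> x c) \<in> Fs V E ID r \<delta> \<and> (rep V E ID r \<delta> x c, x) \<in> Fs V E ID r \<delta>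
     \<and> center V E ID r \<delta> (rep V E ID r \<delta> x c) = c"
proof -
  have "(x,c) \<in> Sig V E ID r \<delta>" using assms unfolding Sig_def by blast
  then show ?thesis using rep_spec[OF assms(3,4)] unfolding Fs_def by force
qed

lemma covering:
  assumes fin: "finite V" and EV: "E \<subseteq> V \<times> V" and sym: "sym E" and inj: "inj_on ID V"
    and xy: "(x,y) \<in> E"
  shows "(\<exists>y'. (x, y') \<in> Fs V E ID r \<delta> \<and> center V E ID r \<delta> y' = center V E ID r \<delta> y) \<or>
         (\<exists>x'. (x', y) \<in> Fs V E ID r \<delta> \<and> center V E ID r \<delta> x' = center V E ID r \<delta> x)"
proof -
  have x: "x \<in> V" and y: "y \<in> V" using xy EV by auto
  have yx: "(y,x) \<in> E" using sym xy by (auto dest: symD)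
  have Vne: "V \<noteq> {}" using x by auto
  define a where "a = center V E ID r \<delta> x"
  define b where "b = center V E ID r \<delta> y"
  let ?Lx = "level V E r \<delta> x" and ?Ly = "level V E r \<delta> y"
  have a: "a \<in> V" "dshift E r \<delta> a x = ?Lx" "\<forall>u\<in>V. dshift E r \<delta> u x = ?Lx \<longrightarrow> ID a \<le> ID u"
    using center_spec[OF fin Vne inj] unfolding a_def by blast+
  have b: "b \<in> V" "dshift E r \<delta> b y = ?Ly" "\<forall>u\<in>V. dshift E r \<delta> u y = ?Ly \<longrightarrow> ID b \<le> ID u"
    using center_spec[OF fin Vne inj] unfolding b_def by blast+
  have bx: "dshift E r \<delta> b x \<le> ?Ly + 1" using dshift_step[OF yx, of r \<delta> b] b(2) by simp
  have ay: "dshift E r \<delta> a y \<le> ?Lx + 1" using dshift_step[OF xy, of r \<delta> a] a(2) by simp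
  have bx2: "?Lx \<le> dshift E r \<delta> b x" using level_le[OF fin b(1)] .
  have ay2: "?Ly \<le> dshift E r \<delta> a y" using level_le[OF fin a(1)] .
  have Lxf: "?Lx \<noteq> \<infinity>" and Lyf: "?Ly \<noteq> \<infinity>" using level_finite[OF fin] x y by auto
  have xpays: "(\<exists>y'. (x, y') \<in> Fs V E ID r \<delta> \<and> center V E ID r \<delta> y' = b)" if "b \<in> Pay V E ID r \<delta> x"
    using pay_gives[OF x that xy b_def[symmetric]] by blast
  have ypays: "(\<exists>x'. (x', y) \<in> Fs V E ID r \<delta> \<and> center V E ID r \<delta> x' = a)" if "a \<in> Pay V E ID r \<delta> y"
    using pay_gives[OF y that yx a_def[symmetric]] by blast
  show ?thesis
  proof (cases "dshift E r \<delta> b x = ?Lx \<or> dshift E r \<delta> a y = ?Ly")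
    case True
    then show ?thesis
    proof
      assume "dshift E r \<delta> b x = ?Lx"
      then have "b \<in> Pay V E ID r \<delta> x" using b(1) by (simp add: Pay_def)
      then show ?thesis using xpays b_def by blast
    next
      assume "dshift E r \<delta> a y = ?Ly"
      then have "a \<in> Pay V E ID r \<delta> y" using a(1) by (simp add: Pay_def)
      then show ?thesis using ypays a_def by blast
    qed
  next
    case False
    obtain lx where lx: "?Lx = enat lx" using Lxf by auto
    obtain ly where ly: "?Ly = enat ly" using Lyf by auto
    obtain dbx where dbx: "dshift E r \<delta> b x = enat dbx" using bx ly
      by (cases "dshift E r \<delta> b x") (auto simp: one_enat_def)
    obtain day where day: "dshift E r \<delta> a y = enat day" using ay lx
      by (cases "dshift E r \<delta> a y") (auto simp: one_enat_def)
    have "dbx = lx + 1" "day = ly + 1" "lx = ly"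
      using False bx ay bx2 ay2 lx ly dbx day by (auto simp: one_enat_def)
    then have eqs: "dshift E r \<delta> b x = ?Lx + 1" "dshift E r \<delta> a y = ?Ly + 1"
      using lx ly dbx day by (auto simp: one_enat_def)
    have "a \<noteq> b" using eqs(1) a(2) Lxf by (metis enat_lt_plus1 less_irrefl)
    then have "ID a \<noteq> ID b" using inj a(1) b(1) by (meson inj_onD)
    then consider "ID b < ID a" | "ID a < ID b" by linarith
    then show ?thesis
    proof cases
      case 1
      then have "b \<in> Pay V E ID r \<delta> x" using b(1) eqs a_def by (simp add: Pay_def)
      then show ?thesis using xpays b_def by blast
    next
      case 2
      then have "a \<in> Pay V E ID r \<delta> y" using a(1) eqs b_def by (simp add: Pay_def)
      then show ?thesis using ypays a_def by blast
    qed
  qed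
qed

lemma card_Fs:
  assumes "finite V"
  shows "card (Fs V E ID r \<delta>) \<le> 2 * (\<Sum>x\<in>V. card (Pay V E ID r \<delta> x))"
proof -
  let ?S = "Sig V E ID r \<delta>"
  have sub: "?S \<subseteq> Sigma V (Pay V E ID r \<delta>)" unfolding Sig_def by auto
  have finP: "\<And>x. finite (Pay V E ID r \<delta> x)" using assms by (simp add: Pay_def)
  have finS: "finite (Sigma V (Pay V E ID r \<delta>))" using assms finP by auto
  have cS: "card ?S \<le> (\<Sum>x\<in>V. card (Pay V E ID r \<delta> x))"
    using card_mono[OF finS sub] card_SigmaI[OF assms, of "Pay V E ID r \<delta>"] finP by simp
  have "card (Fs V E ID r \<delta>) \<le> card ((\<lambda>(x,c). (x, rep V E ID r \<delta> x c)) ` ?S) +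
         card ((\<lambda>(x,c). (rep V E ID r \<delta> x c, x)) ` ?S)"
    unfolding Fs_def by (rule card_Un_le)
  also have "\<dots> \<le> card ?S + card ?S" by (intro add_mono card_image_le finite_subset[OF sub finS])
  finally show ?thesis using cS by linarith
qed



definition gf :: "real \<Rightarrow> nat \<Rightarrow> nat \<Rightarrow> real" where
  "gf p r i = (if i < r then p * (1 - p) ^ i else if i = r then (1 - p) ^ r else 0)"

lemma gf_nonneg: "0 \<le> p \<Longrightarrow> p \<le> 1 \<Longrightarrow> 0 \<le> gf p r i"
  by (simp add: gf_def)

lemma gf_sum: assumes "0 \<le> p" "p \<le> 1" shows "(\<Sum>i\<le>r. gf p r i) = 1"
proof -
  have "(\<Sum>i\<le>r. gf p r i) = (\<Sum>i<r. gf p r i) + gf p r r"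
    by (simp add: lessThan_Suc_atMost[symmetric])
  also have "(\<Sum>i<r. gf p r i) = (\<Sum>i<r. p * (1-p)^i)" by (intro sum.cong) (auto simp: gf_def)
  also have "\<dots> = p * (\<Sum>i<r. (1-p)^i)" by (simp add: sum_distrib_left)
  also have "\<dots> = 1 - (1-p)^r" using one_diff_power_eq[of "1-p" r] by simp
  finally show ?thesis by (simp add: gf_def)
qed

lemma pmf_geomcap: assumes "0 \<le> p" "p \<le> 1" shows "pmf (geomcap p r) i = gf p r i"
proof -
  have "(\<integral>\<^sup>+x. ennreal (gf p r x) \<partial>count_space UNIV) = (\<Sum>x\<le>r. ennreal (gf p r x))"
    by (rule nn_integral_count_space') (auto simp: gf_def)
  also have "\<dots> = ennreal (\<Sum>x\<le>r. gf p r x)" using gf_nonneg[OF assms] by (simp add: sum_ennreal)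
  also have "\<dots> = 1" using gf_sum[OF assms] by simp
  finally have "(\<integral>\<^sup>+x. ennreal (gf p r x) \<partial>count_space UNIV) = 1" .
  moreover have "geomcap p r = embed_pmf (gf p r)"
    unfolding geomcap_def gf_def by (rule arg_cong[where f=embed_pmf]) auto
  ultimately show ?thesis using pmf_embed_pmf[of "gf p r"] gf_nonneg[OF assms] by simp
qed

lemma set_geomcap: assumes "0 \<le> p" "p \<le> 1" shows "set_pmf (geomcap p r) \<subseteq> {..r}"
proof
  fix i assume "i \<in> set_pmf (geomcap p r)"
  then have "pmf (geomcap p r) i \<noteq> 0" by (simp add: set_pmf_eq)
  then show "i \<in> {..r}" using pmf_geomcap[OF assms] by (auto simp: gf_def split: if_splits)
qed

lemma expect_geomcap: assumes "0 \<le> p" "p \<le> 1"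
  shows "measure_pmf.expectation (geomcap p r) (f::nat \<Rightarrow> real) = (\<Sum>j\<le>r. f j * gf p r j)"
  using set_geomcap[OF assms] pmf_geomcap[OF assms]
  by (subst integral_measure_pmf_real[of "{..r}"]) auto

lemma gf_shift: assumes "0 < q" "q \<le> 1" "j < r"
  shows "gf (1 - q) r j \<le> gf (1 - q) r (Suc j) / q"
proof (cases "Suc j < r")
  case True
  then show ?thesis using assms by (simp add: gf_def field_simps)
next
  case False
  then have r: "r = Suc j" using assms by simp
  have "(1 - q) * q ^ j \<le> q ^ j" using assms by (simp add: mult_left_le_one_le)
  then show ?thesis using assms r by (simp add: gf_def field_simps)
qed

lemma one_dim:
  assumes q: "0 < q" "q \<le> 1"
    and f1: "\<And>j. 0 \<le> f1 j" "\<And>j. f1 j \<le> 1" and f3: "\<And>j. 0 \<le> f3 j"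
    and sh: "\<And>j. j < r \<Longrightarrow> f1 j \<le> f3 (Suc j)"
  shows "measure_pmf.expectation (geomcap (1 - q) r) f1 \<le> gf (1 - q) r r
            + measure_pmf.expectation (geomcap (1 - q) r) f3 / q"
proof -
  let ?g = "gf (1 - q) r"
  have p: "0 \<le> 1 - q" "1 - q \<le> 1" using q by auto
  have g0: "\<And>j. 0 \<le> ?g j" using gf_nonneg[OF p] .
  have "(\<Sum>j\<le>r. f1 j * ?g j) = (\<Sum>j<r. f1 j * ?g j) + f1 r * ?g r"
    by (simp add: lessThan_Suc_atMost[symmetric])
  also have "(\<Sum>j<r. f1 j * ?g j) \<le> (\<Sum>j<r. f3 (Suc j) * ?g (Suc j) / q)"
  proof (intro sum_mono)
    fix j assume "j \<in> {..<r}"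
    then have "j < r" by simp
    have "f1 j * ?g j \<le> f3 (Suc j) * (?g (Suc j) / q)"
      by (intro mult_mono sh[OF \<open>j<r\<close>] gf_shift[OF q \<open>j<r\<close>] g0 f3)
    then show "f1 j * ?g j \<le> f3 (Suc j) * ?g (Suc j) / q" by simp
  qed
  also have "(\<Sum>j<r. f3 (Suc j) * ?g (Suc j) / q) \<le> (\<Sum>j\<le>r. f3 j * ?g j) / q"
  proof -
    have "(\<Sum>j\<le>r. f3 j * ?g j) = f3 0 * ?g 0 + (\<Sum>j<r. f3 (Suc j) * ?g (Suc j))"
      unfolding lessThan_Suc_atMost[symmetric] by (rule sum.lessThan_Suc_shift)
    moreover have "0 \<le> f3 0 * ?g 0" using f3 g0 by simp
    ultimately show ?thesis using q by (simp add: sum_divide_distrib[symmetric] divide_right_mono)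
  qed
  also have "f1 r * ?g r \<le> ?g r" using f1 g0 by (simp add: mult_left_le_one_le)
  finally show ?thesis using expect_geomcap[OF p] by simp
qed



lemma Pi_decomp:
  assumes "finite V" "u \<in> V"
  shows "Pi_pmf V 0 (\<lambda>_. G) = bind_pmf (Pi_pmf (V - {u}) 0 (\<lambda>_. G)) (\<lambda>g. map_pmf (\<lambda>y. g(u:=y)) G)"
proof -
  have V: "V = insert u (V - {u})" using assms by auto
  have "Pi_pmf V 0 (\<lambda>_. G) = Pi_pmf (insert u (V - {u})) 0 (\<lambda>_. G)" using V by simp
  also have "\<dots> = do {y \<leftarrow> G; f \<leftarrow> Pi_pmf (V - {u}) 0 (\<lambda>_. G); return_pmf (f(u := y))}"
    using assms by (intro Pi_pmf_insert') auto
  also have "\<dots> = do {f \<leftarrow> Pi_pmf (V - {u}) 0 (\<lambda>_. G); y \<leftarrow> G; return_pmf (f(u := y))}"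
    by (rule bind_commute_pmf)
  finally show ?thesis by (simp add: map_pmf_def)
qed

lemma expect_decomp:
  assumes "finite V" "u \<in> V" "finite (set_pmf G)"
  shows "measure_pmf.expectation (Pi_pmf V 0 (\<lambda>_. G)) (h :: (nat \<Rightarrow> nat) \<Rightarrow> real) =
    (\<Sum>g\<in>set_pmf (Pi_pmf (V - {u}) 0 (\<lambda>_. G)). pmf (Pi_pmf (V - {u}) 0 (\<lambda>_. G)) g *
        measure_pmf.expectation G (\<lambda>y. h (g(u:=y))))"
proof -
  let ?Q = "Pi_pmf (V - {u}) 0 (\<lambda>_. G)"
  have fQ: "finite (set_pmf ?Q)" using assms by (auto simp: set_Pi_pmf)
  show ?thesis
    unfolding Pi_decomp[OF assms(1,2)]
    by (subst pmf_expectation_bind[OF fQ]) (use assms in auto)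
qed

abbreviation "indr (b::bool) \<equiv> (if b then 1 else 0 :: real)"

lemma per_u_bound:
  assumes fin: "finite V" and inj: "inj_on ID V" and x: "x \<in> V" and u: "u \<in> V"
    and q: "0 < q" "q \<le> 1"
  shows "measure_pmf.expectation (Pi_pmf V 0 (\<lambda>_. geomcap (1 - q) r))
            (\<lambda>\<delta>. indr (u \<in> Pay V E ID r \<delta> x))
         \<le> gf (1 - q) r r + measure_pmf.expectation (Pi_pmf V 0 (\<lambda>_. geomcap (1 - q) r))
            (\<lambda>\<delta>. indr (center V E ID r \<delta> x = u)) / q"
proof -
  let ?G = "geomcap (1 - q) r"
  let ?Q = "Pi_pmf (V - {u}) 0 (\<lambda>_. ?G)"
  have p: "0 \<le> 1 - q" "1 - q \<le> 1" using q by auto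
  have fG: "finite (set_pmf ?G)" using set_geomcap[OF p] finite_subset by blast
  have fQ: "finite (set_pmf ?Q)" using fin fG by (auto simp: set_Pi_pmf)
  let ?A = "\<lambda>g. measure_pmf.expectation ?G (\<lambda>y. indr (u \<in> Pay V E ID r (g(u:=y)) x))"
  let ?B = "\<lambda>g. measure_pmf.expectation ?G (\<lambda>y. indr (center V E ID r (g(u:=y)) x = u))"
  have AB: "?A g \<le> gf (1 - q) r r + ?B g / q" for g
  proof (rule one_dim[OF q])
    fix j assume "j < r"
    show "indr (u \<in> Pay V E ID r (g(u:=j)) x) \<le> indr (center V E ID r (g(u:=Suc j)) x = u)"
    proof (cases "u \<in> Pay V E ID r (g(u:=j)) x")
      case True
      have "center V E ID r ((g(u:=j))(u := Suc ((g(u:=j)) u))) x = u"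
        using shift_center[OF fin inj x True] \<open>j < r\<close> by simp
      then show ?thesis by simp
    qed simp
  qed auto
  have "measure_pmf.expectation (Pi_pmf V 0 (\<lambda>_. ?G)) (\<lambda>\<delta>. indr (u \<in> Pay V E ID r \<delta> x))
      = (\<Sum>g\<in>set_pmf ?Q. pmf ?Q g * ?A g)"
    by (rule expect_decomp[OF fin u fG])
  also have "\<dots> \<le> (\<Sum>g\<in>set_pmf ?Q. pmf ?Q g * (gf (1 - q) r r + ?B g / q))"
    by (intro sum_mono mult_left_mono AB) auto
  also have "\<dots> = gf (1 - q) r r * (\<Sum>g\<in>set_pmf ?Q. pmf ?Q g) + (\<Sum>g\<in>set_pmf ?Q. pmf ?Q g * ?B g) / q"
    by (simp add: algebra_simps sum.distrib sum_distrib_left sum_divide_distrib)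
  also have "(\<Sum>g\<in>set_pmf ?Q. pmf ?Q g) = 1" using sum_pmf_eq_1[OF fQ] by simp
  also have "(\<Sum>g\<in>set_pmf ?Q. pmf ?Q g * ?B g) =
     measure_pmf.expectation (Pi_pmf V 0 (\<lambda>_. ?G)) (\<lambda>\<delta>. indr (center V E ID r \<delta> x = u))"
    by (rule expect_decomp[OF fin u fG, symmetric])
  finally show ?thesis by simp
qed



lemma card_as_sum: "finite V \<Longrightarrow> S \<subseteq> V \<Longrightarrow> real (card S) = (\<Sum>u\<in>V. indr (u \<in> S))"
proof -
  assume "finite V" "S \<subseteq> V"
  then have "(\<Sum>u\<in>V. indr (u \<in> S)) = (\<Sum>u\<in>{u\<in>V. u \<in> S}. 1)"
    by (subst sum.inter_filter) auto
  also have "{u\<in>V. u \<in> S} = S" using \<open>S \<subseteq> V\<close> by auto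
  finally show ?thesis by simp
qed

lemma sum_center_le1: "finite V \<Longrightarrow> (\<Sum>u\<in>V. indr (c = u)) \<le> 1"
proof -
  assume "finite V"
  have "(\<Sum>u\<in>V. indr (c = u)) = (\<Sum>u\<in>{u\<in>V. c = u}. 1)"
    by (subst sum.inter_filter) (use \<open>finite V\<close> in auto)
  also have "\<dots> = real (card {u\<in>V. c = u})" by simp
  also have "card {u\<in>V. c = u} \<le> 1"
  proof -
    have "{u\<in>V. c = u} \<subseteq> {c}" by auto
    then show ?thesis using card_mono[of "{c}" "{u\<in>V. c = u}"] by simp
  qed
  finally show ?thesis by simp
qed

lemma expect_card_Fs:
  assumes fin: "finite V" and inj: "inj_on ID V" and q: "0 < q" "q \<le> 1"
  shows "measure_pmf.expectation (Pi_pmf V 0 (\<lambda>_. geomcap (1 - q) r))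
            (\<lambda>\<delta>. real (card (Fs V E ID r \<delta>)))
         \<le> 2 * real (card V) * (real (card V) * gf (1 - q) r r + 1 / q)"
proof -
  let ?G = "geomcap (1 - q) r"
  let ?P = "Pi_pmf V 0 (\<lambda>_. ?G)"
  have p: "0 \<le> 1 - q" "1 - q \<le> 1" using q by auto
  have fG: "finite (set_pmf ?G)" using set_geomcap[OF p] finite_subset by blast
  have fP: "finite (set_pmf ?P)" using fin fG by (auto simp: set_Pi_pmf)
  have int: "\<And>f::(nat\<Rightarrow>nat) \<Rightarrow> real. integrable (measure_pmf ?P) f"
    by (rule integrable_measure_pmf_finite[OF fP])
  have paysub: "\<And>\<delta> x. Pay V E ID r \<delta> x \<subseteq> V" by (auto simp: Pay_def)
  have perx: "measure_pmf.expectation ?P (\<lambda>\<delta>. real (card (Pay V E ID r \<delta> x)))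
      \<le> real (card V) * gf (1 - q) r r + 1 / q" if x: "x \<in> V" for x
  proof -
    have "measure_pmf.expectation ?P (\<lambda>\<delta>. real (card (Pay V E ID r \<delta> x)))
        = measure_pmf.expectation ?P (\<lambda>\<delta>. \<Sum>u\<in>V. indr (u \<in> Pay V E ID r \<delta> x))"
      using card_as_sum[OF fin paysub] by simp
    also have "\<dots> = (\<Sum>u\<in>V. measure_pmf.expectation ?P (\<lambda>\<delta>. indr (u \<in> Pay V E ID r \<delta> x)))"
      using Bochner_Integration.integral_sum[of V "measure_pmf ?P" "\<lambda>u \<delta>. indr (u \<in> Pay V E ID r \<delta> x)"] int by simp
    also have "\<dots> \<le> (\<Sum>u\<in>V. gf (1 - q) r r + measure_pmf.expectation ?P
            (\<lambda>\<delta>. indr (center V E ID r \<delta> x = u)) / q)"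
      by (intro sum_mono per_u_bound[OF fin inj x _ q]) auto
    also have "\<dots> = real (card V) * gf (1 - q) r r +
        (\<Sum>u\<in>V. measure_pmf.expectation ?P (\<lambda>\<delta>. indr (center V E ID r \<delta> x = u))) / q"
      by (simp add: sum.distrib sum_divide_distrib)
    also have "(\<Sum>u\<in>V. measure_pmf.expectation ?P (\<lambda>\<delta>. indr (center V E ID r \<delta> x = u)))
        = measure_pmf.expectation ?P (\<lambda>\<delta>. \<Sum>u\<in>V. indr (center V E ID r \<delta> x = u))"
      using Bochner_Integration.integral_sum[of V "measure_pmf ?P" "\<lambda>u \<delta>. indr (center V E ID r \<delta> x = u)"] int by simp
    also have "\<dots> \<le> measure_pmf.expectation ?P (\<lambda>\<delta>. 1)"
      by (intro integral_mono int sum_center_le1[OF fin])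
    also have "\<dots> = 1" by simp
    finally show ?thesis using q by (simp add: divide_right_mono)
  qed
  have "measure_pmf.expectation ?P (\<lambda>\<delta>. real (card (Fs V E ID r \<delta>)))
      \<le> measure_pmf.expectation ?P (\<lambda>\<delta>. 2 * (\<Sum>x\<in>V. real (card (Pay V E ID r \<delta> x))))"
  proof (intro integral_mono int)
    fix \<delta>
    have "card (Fs V E ID r \<delta>) \<le> 2 * (\<Sum>x\<in>V. card (Pay V E ID r \<delta> x))" by (rule card_Fs[OF fin])
    then show "real (card (Fs V E ID r \<delta>)) \<le> 2 * (\<Sum>x\<in>V. real (card (Pay V E ID r \<delta> x)))"
      by (metis (mono_tags) of_nat_le_iff of_nat_mult of_nat_numeral of_nat_sum)
  qed
  also have "\<dots> = 2 * (\<Sum>x\<in>V. measure_pmf.expectation ?P (\<lambda>\<delta>. real (card (Pay V E ID r \<delta> x))))"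
    by (simp add: Bochner_Integration.integral_sum[OF int])
  also have "\<dots> \<le> 2 * (\<Sum>x\<in>V. real (card V) * gf (1 - q) r r + 1 / q)"
    by (intro mult_left_mono sum_mono perx) auto
  also have "\<dots> = 2 * real (card V) * (real (card V) * gf (1 - q) r r + 1 / q)" by simp
  finally show ?thesis .
qed

lemma final_arith:
  assumes n: "1 \<le> n" and k: "2 \<le> k"
  defines "q \<equiv> real n powr (- 1 / real k)"
  shows "0 < q" "q \<le> 1"
    "2 * real n * (real n * gf (1 - q) (k - 1) (k - 1) + 1 / q) \<le> 4 * real n powr (1 + 1 / real k)"
proof -
  have n0: "0 < real n" using n by simp
  show q0: "0 < q" unfolding q_def using n0 by simp
  have "real n powr (- 1 / real k) \<le> real n powr 0" using n k by (intro powr_mono) auto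
  then show "q \<le> 1" unfolding q_def using n0 by simp
  have g: "gf (1 - q) (k - 1) (k - 1) = q ^ (k - 1)" by (simp add: gf_def)
  have "q ^ (k - 1) = real n powr (real (k - 1) * (- 1 / real k))"
    unfolding q_def using n0 by (simp add: powr_power)
  then have "real n * q ^ (k - 1) = real n powr 1 * real n powr (real (k - 1) * (- 1 / real k))"
    using n0 by simp
  also have "\<dots> = real n powr (1 + real (k - 1) * (- 1 / real k))"
    by (rule powr_add[symmetric])
  also have "1 + real (k - 1) * (- 1 / real k) = 1 / real k" using k by (simp add: of_nat_diff field_simps)
  finally have A: "real n * q ^ (k - 1) = real n powr (1 / real k)" .
  have B: "1 / q = real n powr (1 / real k)" unfolding q_def using n0
    by (simp add: powr_minus_divide[symmetric] powr_minus divide_inverse)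
  have "2 * real n * (real n * gf (1 - q) (k - 1) (k - 1) + 1 / q) = 4 * (real n * real n powr (1 / real k))"
    using A B g by simp
  also have "real n * real n powr (1 / real k) = real n powr (1 + 1 / real k)"
    using n0 powr_add[of "real n" 1 "1 / real k"] by simp
  finally show "2 * real n * (real n * gf (1 - q) (k - 1) (k - 1) + 1 / q) \<le> 4 * real n powr (1 + 1 / real k)" by simp
qed

theorem lemma9:
  "\<exists>C::real. \<forall>(V::nat set) (E::(nat \<times> nat) set) (ID::nat \<Rightarrow> nat) (k::nat).
     finite V \<and> E \<subseteq> V \<times> V \<and> sym E \<and> irrefl E \<and> inj_on ID V \<and> k \<ge> 2 \<longrightarrow>
     (let n = card V; r = k - 1; p = 1 - real n powr (- 1 / real k);
          P = Pi_pmf V 0 (\<lambda>_. geomcap p r) in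
      \<exists>F :: (nat \<Rightarrow> nat) \<Rightarrow> (nat \<times> nat) set.
        (\<forall>\<delta> \<in> set_pmf P. F \<delta> \<subseteq> E \<and>
           (\<forall>(x, y) \<in> E.
              (\<exists>y'. (x, y') \<in> F \<delta> \<and> center V E ID r \<delta> y' = center V E ID r \<delta> y) \<or>
              (\<exists>x'. (x', y) \<in> F \<delta> \<and> center V E ID r \<delta> x' = center V E ID r \<delta> x))) \<and>
        measure_pmf.expectation P (\<lambda>\<delta>. real (card (F \<delta>)))
          \<le> C * real n powr (1 + 1 / real k))"
proof (rule exI[of _ 4], intro allI impI)
  fix V :: "nat set" and E :: "(nat \<times> nat) set" and ID :: "nat \<Rightarrow> nat" and k :: nat
  assume H: "finite V \<and> E \<subseteq> V \<times> V \<and> sym E \<and> irrefl E \<and> inj_on ID V \<and> k \<ge> 2"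
  then have fin: "finite V" and EV: "E \<subseteq> V \<times> V" and sym: "sym E" and inj: "inj_on ID V"
    and k: "2 \<le> k" by auto
  show "let n = card V; r = k - 1; p = 1 - real n powr (- 1 / real k);
          P = Pi_pmf V 0 (\<lambda>_. geomcap p r) in
      \<exists>F :: (nat \<Rightarrow> nat) \<Rightarrow> (nat \<times> nat) set.
        (\<forall>\<delta> \<in> set_pmf P. F \<delta> \<subseteq> E \<and>
           (\<forall>(x, y) \<in> E.
              (\<exists>y'. (x, y') \<in> F \<delta> \<and> center V E ID r \<delta> y' = center V E ID r \<delta> y) \<or>
              (\<exists>x'. (x', y) \<in> F \<delta> \<and> center V E ID r \<delta> x' = center V E ID r \<delta> x))) \<and>
        measure_pmf.expectation P (\<lambda>\<delta>. real (card (F \<delta>)))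
          \<le> 4 * real n powr (1 + 1 / real k)"
  proof (cases "V = {}")
    case True
    then have "E = {}" using EV by auto
    then show ?thesis using True by (auto simp: Let_def intro!: exI[of _ "\<lambda>_. {}"])
  next
    case False
    define n where "n = card V"
    have n: "1 \<le> n" using False fin unfolding n_def by (simp add: Suc_le_eq card_gt_0_iff)
    define q where "q = real n powr (- 1 / real k)"
    note fa = final_arith[OF n k, folded q_def]
    have cov: "\<forall>\<delta>. Fs V E ID (k - 1) \<delta> \<subseteq> E \<and>
           (\<forall>(x, y) \<in> E.
              (\<exists>y'. (x, y') \<in> Fs V E ID (k - 1) \<delta> \<and> center V E ID (k - 1) \<delta> y' = center V E ID (k - 1) \<delta> y) \<or>
              (\<exists>x'. (x', y) \<in> Fs V E ID (k - 1) \<delta> \<and> center V E ID (k - 1) \<delta> x' = center V E ID (k - 1) \<delta> x))"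
      using Fs_sub[OF sym] covering[OF fin EV sym inj] by blast
    have ex: "measure_pmf.expectation (Pi_pmf V 0 (\<lambda>_. geomcap (1 - q) (k - 1)))
            (\<lambda>\<delta>. real (card (Fs V E ID (k - 1) \<delta>))) \<le> 4 * real n powr (1 + 1 / real k)"
      using expect_card_Fs[OF fin inj fa(1,2), of "k - 1" E] fa(3) unfolding n_def by linarith
    show ?thesis unfolding Let_def n_def[symmetric] q_def[symmetric]
      using cov ex by (intro exI[of _ "Fs V E ID (k - 1)"]) blast
  qed
qed


end
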